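(* Let $n\ge 3$ and let $H$ be a $3$-uniform hypergraph on $[n]$ such that every $4$-subset of $[n]$ contains an edge of $H$. Let $\Delta=K(H)$ be the $2$-dimensional simplicial complex whose $2$-faces are the edges of $H$ and whose $1$-skeleton is the complete graph on $[n]$. Then $\dim_{\mathbb{Q}} H_1(\Delta;\mathbb{Q})\le n-2$.
   Context: $H_1(\Delta;\mathbb{Q})$ is the first simplicial homology group of $\Delta$ with rational coefficients. *)

theory Defs
  imports Complex_Main "HOL-Library.Function_Algebras"
begin

text \<open>A simplex is a finite set of
  natural numbers, oriented by the natural order of its vertices.\<close>

definition chains :: "nat set set \<Rightarrow> (nat set \<Rightarrow> rat) set" where
  "chains F = {c. \<forall>\<tau>. \<tau> \<notin> F \<longrightarrow> c \<tau> = 0}"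

text \<open>Simplicial boundary from chains on faces F to chains on faces G (one dimension lower):
  removing the vertex v from tau contributes sign (-1)^(position of v in sorted tau).\<close>

definition bdry :: "nat set set \<Rightarrow> nat set set \<Rightarrow> (nat set \<Rightarrow> rat) \<Rightarrow> (nat set \<Rightarrow> rat)" where
  "bdry F G c = (\<lambda>\<sigma>. if \<sigma> \<in> G then
      (\<Sum>\<tau>\<in>{\<tau>\<in>F. \<sigma> \<subset> \<tau> \<and> card \<tau> = Suc (card \<sigma>)}.
          (-1) ^ card {x\<in>\<sigma>. x < the_elem (\<tau> - \<sigma>)} * c \<tau>)
    else 0)"

definition qscale :: "rat \<Rightarrow> (nat set \<Rightarrow> rat) \<Rightarrow> (nat set \<Rightarrow> rat)" where
  "qscale a f = (\<lambda>x. a * f x)"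

definition KV :: "nat \<Rightarrow> nat set set" where
  "KV n = {{i} | i. i \<in> {1..n}}"

definition KE :: "nat \<Rightarrow> nat set set" where
  "KE n = {e. e \<subseteq> {1..n} \<and> card e = 2}"

definition cycles1 :: "nat \<Rightarrow> nat set set \<Rightarrow> (nat set \<Rightarrow> rat) set" where
  "cycles1 n H = {c \<in> chains (KE n). bdry (KE n) (KV n) c = (\<lambda>_. 0)}"

definition boundaries1 :: "nat \<Rightarrow> nat set set \<Rightarrow> (nat set \<Rightarrow> rat) set" where
  "boundaries1 n H = bdry H (KE n) ` chains H"

definition betti1 :: "nat \<Rightarrow> nat set set \<Rightarrow> nat" where
  "betti1 n H = vector_space.dim qscale (cycles1 n H) - vector_space.dim qscale (boundaries1 n H)"

end

theory Submission
  imports Defs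
begin

interpretation Q: vector_space qscale
  by unfold_locales (auto simp: qscale_def fun_eq_iff algebra_simps)

definition ind :: "nat set \<Rightarrow> nat set \<Rightarrow> rat" where
  "ind t = (\<lambda>s. if s = t then 1 else 0)"

definition KEg :: "nat set \<Rightarrow> nat set set" where
  "KEg V = {e. e \<subseteq> V \<and> card e = 2}"

definition KVg :: "nat set \<Rightarrow> nat set set" where
  "KVg V = {{i} | i. i \<in> V}"

lemma sum_fun_apply: "(sum f A) x = sum (\<lambda>a. f a x) A"
  by (induction A rule: infinite_finite_induct) auto

lemma bdry_add: "bdry F G (f + g) = bdry F G f + bdry F G g"
  by (auto simp: bdry_def fun_eq_iff distrib_left sum.distrib)

lemma bdry_scale: "bdry F G (qscale a f) = qscale a (bdry F G f)"
  by (auto simp: bdry_def fun_eq_iff qscale_def sum_distrib_left algebra_simps)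

lemma bdry_linear: "Vector_Spaces.linear qscale qscale (bdry F G)"
  by (unfold_locales) (auto simp: bdry_add bdry_scale)

lemma chains_subspace: "Q.subspace (chains F)"
  by (auto simp: Q.subspace_def chains_def qscale_def)

lemma chains_span: 
  assumes "finite P" "c \<in> chains P"
  shows "c = (\<Sum>q\<in>P. qscale (c q) (ind q))"
proof
  fix x
  show "c x = (\<Sum>q\<in>P. qscale (c q) (ind q)) x"
    using assms by (auto simp: sum_fun_apply qscale_def ind_def chains_def
      if_distrib[where f="\<lambda>z. _ * z"] sum.delta cong: if_cong)
qed

lemma chains_in_span:
  assumes "finite P" "c \<in> chains P"
  shows "c \<in> Q.span (ind ` P)"
  apply (subst chains_span[OF assms])
  by (intro Q.span_sum Q.span_scale Q.span_base) auto

lemma ind_chains: "q \<in> P \<Longrightarrow> ind q \<in> chains P"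
  by (auto simp: ind_def chains_def)

lemma span_ind_chains: "Q.span (ind ` P) \<subseteq> chains P"
  by (intro Q.span_minimal chains_subspace) (auto simp: ind_chains)

lemma bdry_ind:
  assumes "finite F" "t \<in> F"
  shows "bdry F G (ind t) s = (if s \<in> G \<and> s \<subset> t \<and> card t = Suc (card s)
     then (-1) ^ card {x\<in>s. x < the_elem (t - s)} else 0)"
proof -
  have fin: "finite {\<tau>\<in>F. s \<subset> \<tau> \<and> card \<tau> = Suc (card s)}" using assms by auto
  show ?thesis
    using assms fin unfolding bdry_def ind_def
    by (auto simp: if_distrib[where f="\<lambda>z. _ * z"] sum.delta' cong: if_cong)
qed

lemma finite_KEg: "finite V \<Longrightarrow> finite (KEg V)"
  unfolding KEg_def by (rule finite_subset[of _ "Pow V"]) auto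

lemma bdry_edge:
  assumes "finite V" "p \<in> V" "q \<in> V" "p < q"
  shows "bdry (KEg V) (KVg V) (ind {p,q}) = ind {q} - ind {p}"
proof
  fix s
  have pq: "{p,q} \<in> KEg V" using assms by (auto simp: KEg_def)
  show "bdry (KEg V) (KVg V) (ind {p,q}) s = (ind {q} - ind {p}) s"
  proof (cases "s \<in> KVg V \<and> s \<subset> {p,q} \<and> card {p,q} = Suc (card s)")
    case True
    then obtain i where s: "s = {i}" "i \<in> V" by (auto simp: KVg_def)
    with True have "i = p \<or> i = q" by auto
    have b: "bdry (KEg V) (KVg V) (ind {p,q}) s = (-1) ^ card {x\<in>s. x < the_elem ({p,q} - s)}"
      using True pq assms by (simp add: bdry_ind[OF finite_KEg])
    from \<open>i = p \<or> i = q\<close> show ?thesis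
    proof
      assume "i = p"
      then have d: "{p,q} - s = {q}" using s assms by auto
      then have "{x\<in>s. x < the_elem ({p,q} - s)} = {p}" using s assms \<open>i = p\<close> by auto
      then have e: "card {x\<in>s. x < the_elem ({p,q} - s)} = 1" by simp
      show ?thesis unfolding b e using s \<open>i = p\<close> assms by (auto simp: ind_def)
    next
      assume "i = q"
      then have d: "{p,q} - s = {p}" using s assms by auto
      then have "{x\<in>s. x < the_elem ({p,q} - s)} = {}" using s assms \<open>i = q\<close> by auto
      then have e: "card {x\<in>s. x < the_elem ({p,q} - s)} = 0" by simp
      show ?thesis unfolding b e using s \<open>i = q\<close> assms by (auto simp: ind_def)
    qed
  next
    case False
    have "s \<noteq> {p}" "s \<noteq> {q}" using False assms by (auto simp: KVg_def)
    then show ?thesis using False assms pq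
      by (simp add: bdry_ind[OF finite_KEg]) (auto simp add: ind_def)
  qed
qed

lemma sub3_cases:
  assumes "s \<subset> {a,b,c}" "card s = 2"
  shows "s = {b,c} \<or> s = {a,c} \<or> s = {a,b}"
proof -
  from assms obtain x y where s: "s = {x,y}" "x \<noteq> y" by (meson card_2_iff)
  have "x \<in> {a,b,c}" "y \<in> {a,b,c}" using assms s by auto
  then show ?thesis using s(2)
    unfolding s(1) doubleton_eq_iff by blast
qed

lemma bdry_tri:
  assumes "finite F" "{a,b,c} \<in> F" "a < b" "b < c" "a \<in> V" "b \<in> V" "c \<in> V"
  shows "bdry F (KEg V) (ind {a,b,c}) = ind {b,c} - ind {a,c} + ind {a,b}"
proof
  fix s
  have c3: "card {a,b,c} = 3" using assms by auto
  show "bdry F (KEg V) (ind {a,b,c}) s = (ind {b,c} - ind {a,c} + ind {a,b}) s"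
  proof (cases "s \<in> KEg V \<and> s \<subset> {a,b,c} \<and> card {a,b,c} = Suc (card s)")
    case True
    have bb: "bdry F (KEg V) (ind {a,b,c}) s = (-1) ^ card {x\<in>s. x < the_elem ({a,b,c} - s)}"
      using bdry_ind[OF assms(1,2), of "KEg V" s] unfolding if_P[OF True] .
    have "card s = 2" using True c3 by linarith
    then have "s = {b,c} \<or> s = {a,c} \<or> s = {a,b}" using True by (intro sub3_cases) auto
    then show ?thesis
    proof (elim disjE)
      assume s: "s = {b,c}"
      then have "{a,b,c} - s = {a}" using assms by auto
      then have te: "the_elem ({a,b,c} - s) = a" by simp
      have "{x \<in> s. x < a} = {}" using s assms by auto
      then have e: "card {x \<in> s. x < the_elem ({a,b,c} - s)} = 0" unfolding te using assms by simp
      show ?thesis unfolding bb e using assms s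
        by (simp add: ind_def doubleton_eq_iff)
    next
      assume s: "s = {a,c}"
      then have "{a,b,c} - s = {b}" using assms by auto
      then have te: "the_elem ({a,b,c} - s) = b" by simp
      have "{x \<in> s. x < b} = {a}" using s assms by auto
      then have e: "card {x \<in> s. x < the_elem ({a,b,c} - s)} = 1" unfolding te using assms by simp
      show ?thesis unfolding bb e using assms s
        by (simp add: ind_def doubleton_eq_iff)
    next
      assume s: "s = {a,b}"
      then have "{a,b,c} - s = {c}" using assms by auto
      then have te: "the_elem ({a,b,c} - s) = c" by simp
      have "{x \<in> s. x < c} = {a,b}" using s assms by auto
      then have e: "card {x \<in> s. x < the_elem ({a,b,c} - s)} = 2" unfolding te using assms by simp
      show ?thesis unfolding bb e using assms s
        by (simp add: ind_def doubleton_eq_iff)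
    qed
  next
    case False
    have c3': "card {a,b,c} = Suc 2" using c3 by simp
    have k: "{b,c} \<in> KEg V" "{a,c} \<in> KEg V" "{a,b} \<in> KEg V" using assms by (auto simp: KEg_def)
    have "a \<notin> {b,c}" "b \<notin> {a,c}" "c \<notin> {a,b}" using assms by auto
    then have p: "{b,c} \<subset> {a,b,c}" "{a,c} \<subset> {a,b,c}" "{a,b} \<subset> {a,b,c}" by auto
    have cc: "card {b,c} = 2" "card {a,c} = 2" "card {a,b} = 2" using assms by auto
    have "s \<noteq> {b,c} \<and> s \<noteq> {a,c} \<and> s \<noteq> {a,b}"
      using False k p cc c3' by metis
    moreover have "bdry F (KEg V) (ind {a,b,c}) s = 0"
      using bdry_ind[OF assms(1,2), of "KEg V" s] unfolding if_not_P[OF False] .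
    ultimately show ?thesis by (simp add: ind_def)
  qed
qed

lemma bdry_zero: "bdry F G 0 = 0"
  by (simp add: bdry_def fun_eq_iff)

lemma bdry_diff: "bdry F G (f - g) = bdry F G f - bdry F G g"
  using bdry_add[of F G "f - g" g] by (simp add: algebra_simps)

lemma bdry_chains: "bdry F G c \<in> chains G"
  by (simp add: chains_def bdry_def)

lemma sort3:
  fixes t :: "nat set"
  assumes "card t = 3"
  obtains a b c where "a < b" "b < c" "t = {a,b,c}"
proof -
  from assms obtain x y z where t: "t = {x,y,z}" "x \<noteq> y" "x \<noteq> z" "y \<noteq> z"
    by (meson card_3_iff)
  have "\<exists>a b c. a < b \<and> b < c \<and> t = {a,b,c}"
  proof (cases "x < y")
    case True
    show ?thesis
    proof (cases "y < z")
      case True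
      then show ?thesis using \<open>x < y\<close> t by blast
    next
      case False
      then have "z < y" using t by auto
      show ?thesis
      proof (cases "x < z")
        case True
        then show ?thesis using \<open>z < y\<close> t by (intro exI[of _ x] exI[of _ z] exI[of _ y]) auto
      next
        case False
        then have "z < x" using t by auto
        then show ?thesis using \<open>x < y\<close> t by (intro exI[of _ z] exI[of _ x] exI[of _ y]) auto
      qed
    qed
  next
    case False
    then have "y < x" using t by auto
    show ?thesis
    proof (cases "x < z")
      case True
      then show ?thesis using \<open>y < x\<close> t by (intro exI[of _ y] exI[of _ x] exI[of _ z]) auto
    next
      case False
      then have "z < x" using t by auto
      show ?thesis
      proof (cases "y < z")
        case True
        then show ?thesis using \<open>z < x\<close> t by (intro exI[of _ y] exI[of _ z] exI[of _ x]) auto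
      next
        case False
        then have "z < y" using t by auto
        then show ?thesis using \<open>y < x\<close> t by (intro exI[of _ z] exI[of _ y] exI[of _ x]) auto
      qed
    qed
  qed
  then show ?thesis using that by blast
qed

lemma dd_tri:
  assumes "finite V" "finite F" "t \<in> F" "card t = 3" "t \<subseteq> V"
  shows "bdry (KEg V) (KVg V) (bdry F (KEg V) (ind t)) = 0"
proof -
  obtain a b c where abc: "a < b" "b < c" "t = {a,b,c}" using sort3[OF assms(4)] by blast
  have V: "a \<in> V" "b \<in> V" "c \<in> V" using assms abc by auto
  have "bdry F (KEg V) (ind t) = ind {b,c} - ind {a,c} + ind {a,b}"
    unfolding abc(3) using assms abc V by (intro bdry_tri) auto
  then show ?thesis
    using abc V assms(1)
    by (simp add: bdry_add bdry_diff bdry_edge)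
qed

lemma tri_span:
  assumes "finite F" "t \<in> F" "card t = 3" "t \<subseteq> V"
    and "bdry F (KEg V) (ind t) \<in> Q.span X"
    and "p \<subseteq> t" "card p = 2"
    and "\<And>q. q \<subseteq> t \<Longrightarrow> card q = 2 \<Longrightarrow> q \<noteq> p \<Longrightarrow> ind q \<in> Q.span X"
  shows "ind p \<in> Q.span X"
proof -
  obtain a b c where abc: "a < b" "b < c" "t = {a,b,c}" using sort3[OF assms(3)] by blast
  have V: "a \<in> V" "b \<in> V" "c \<in> V" using assms(4) abc by auto
  have eq: "bdry F (KEg V) (ind t) = ind {b,c} - ind {a,c} + ind {a,b}"
    unfolding abc(3) using assms(1,2) abc V by (intro bdry_tri) auto
  have ne: "{b,c} \<noteq> {a,c}" "{b,c} \<noteq> {a,b}" "{a,c} \<noteq> {a,b}" using abc by (auto simp: doubleton_eq_iff)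
  have sub: "{b,c} \<subseteq> t" "{a,c} \<subseteq> t" "{a,b} \<subseteq> t" using abc by auto
  have cd: "card {b,c} = 2" "card {a,c} = 2" "card {a,b} = 2" using abc by auto
  have S: "ind {b,c} - ind {a,c} + ind {a,b} \<in> Q.span X" using assms(5) eq by simp
  have "p \<noteq> t" using assms(7,3) by auto
  then have "p \<subset> t" using assms(6) by blast
  then have "p = {b,c} \<or> p = {a,c} \<or> p = {a,b}" using assms(7) unfolding abc(3) by (rule sub3_cases)
  then show ?thesis
  proof (elim disjE)
    assume p: "p = {b,c}"
    have h: "ind {a,c} \<in> Q.span X" "ind {a,b} \<in> Q.span X"
      using assms(8)[OF sub(2) cd(2)] assms(8)[OF sub(3) cd(3)] ne p by auto
    have "(ind {b,c} - ind {a,c} + ind {a,b}) + ind {a,c} - ind {a,b} \<in> Q.span X"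
      by (rule Q.span_diff[OF Q.span_add[OF S h(1)] h(2)])
    then show ?thesis using p by simp
  next
    assume p: "p = {a,c}"
    have h: "ind {b,c} \<in> Q.span X" "ind {a,b} \<in> Q.span X"
      using assms(8)[OF sub(1) cd(1)] assms(8)[OF sub(3) cd(3)] ne p by auto
    have "ind {b,c} + ind {a,b} - (ind {b,c} - ind {a,c} + ind {a,b}) \<in> Q.span X"
      by (rule Q.span_diff[OF Q.span_add[OF h(1) h(2)] S])
    then show ?thesis using p by simp
  next
    assume p: "p = {a,b}"
    have h: "ind {b,c} \<in> Q.span X" "ind {a,c} \<in> Q.span X"
      using assms(8)[OF sub(1) cd(1)] assms(8)[OF sub(2) cd(2)] ne p by auto
    have "(ind {b,c} - ind {a,c} + ind {a,b}) - ind {b,c} + ind {a,c} \<in> Q.span X"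
      by (rule Q.span_add[OF Q.span_diff[OF S h(1)] h(2)])
    then show ?thesis using p by simp
  qed
qed

definition Rl :: "nat set set \<Rightarrow> nat set \<Rightarrow> nat \<Rightarrow> (nat \<times> nat) set" where
  "Rl H V v = {(a,b). {v,a,b} \<in> H \<and> a \<in> V - {v} \<and> b \<in> V - {v}}"

lemma Rl_sym: "(a,b) \<in> Rl H V v \<Longrightarrow> (b,a) \<in> Rl H V v"
  by (auto simp: Rl_def insert_commute)

lemma Rl_conn_sym:
  assumes "(a,b) \<in> (Rl H V v)\<^sup>*" shows "(b,a) \<in> (Rl H V v)\<^sup>*"
  using assms
proof (induction rule: rtrancl_induct)
  case base then show ?case by simp
next
  case (step y z)
  then show ?case by (meson Rl_sym converse_rtrancl_into_rtrancl)
qed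

lemma four:
  assumes cover: "\<forall>S. S \<subseteq> V \<and> card S = 4 \<longrightarrow> (\<exists>e\<in>H. e \<subseteq> S)"
    and H3: "\<forall>e\<in>H. card e = 3"
    and d: "a \<in> V" "b \<in> V" "c \<in> V" "d \<in> V" "a \<noteq> b" "a \<noteq> c" "a \<noteq> d" "b \<noteq> c" "b \<noteq> d" "c \<noteq> d"
  shows "{a,b,c} \<in> H \<or> {a,b,d} \<in> H \<or> {a,c,d} \<in> H \<or> {b,c,d} \<in> H"
proof -
  let ?S = "{a,b,c,d}"
  have cS: "card ?S = 4" using d(5-10) by simp
  have "?S \<subseteq> V" using d(1-4) by simp
  then obtain e where e: "e \<in> H" "e \<subseteq> ?S" using cover cS by blast
  have ce: "card e = 3" using H3 e(1) by blast
  have fe: "finite e" using ce card.infinite by fastforce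
  have "\<not> ?S \<subseteq> e"
  proof
    assume "?S \<subseteq> e"
    then have "card ?S \<le> card e" using fe by (rule card_mono[rotated])
    then show False using cS ce by simp
  qed
  then obtain t where t: "t \<in> ?S" "t \<notin> e" by blast
  have "e \<subseteq> ?S - {t}" using e(2) t(2) by blast
  moreover have "card (?S - {t}) = 3" using cS t(1) by simp
  ultimately have eS: "e = ?S - {t}"
    using ce by (intro card_subset_eq) auto
  have sd: "?S - {a} = {b,c,d}" "?S - {b} = {a,c,d}" "?S - {c} = {a,b,d}" "?S - {d} = {a,b,c}"
    using d(5-10) by auto
  from t(1) have "t = a \<or> t = b \<or> t = c \<or> t = d" by simp
  then show ?thesis
  proof (elim disjE)
    assume "t = a" then show ?thesis using eS sd e(1) by simp
  next
    assume "t = b" then show ?thesis using eS sd e(1) by simp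
  next
    assume "t = c" then show ?thesis using eS sd e(1) by simp
  next
    assume "t = d" then show ?thesis using eS sd e(1) by simp
  qed
qed

definition goodv :: "nat set set \<Rightarrow> nat set \<Rightarrow> nat \<Rightarrow> nat \<Rightarrow> nat \<Rightarrow> bool" where
  "goodv H V v x1 x2 \<longleftrightarrow> x1 \<in> V - {v} \<and> x2 \<in> V - {v} \<and> x1 \<noteq> x2 \<and>
     (\<forall>x\<in>V - {v}. (x1,x) \<in> (Rl H V v)\<^sup>* \<or> (x2,x) \<in> (Rl H V v)\<^sup>*)"

lemma exists_good:
  assumes fin: "finite V" and c3: "card V \<ge> 3"
    and H3: "\<forall>e\<in>H. card e = 3"
    and cover: "\<forall>S. S \<subseteq> V \<and> card S = 4 \<longrightarrow> (\<exists>e\<in>H. e \<subseteq> S)"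
  shows "\<exists>v\<in>V. \<exists>x1 x2. goodv H V v x1 x2"
proof (rule ccontr)
  assume ng: "\<not> ?thesis"
  have "V \<noteq> {}" using c3 by auto
  then obtain v0 where v0: "v0 \<in> V" by blast
  have "card (V - {v0}) \<ge> 2" using c3 v0 fin by simp
  then have "V - {v0} \<noteq> {}" by (intro notI) simp
  then obtain x where x: "x \<in> V - {v0}" by blast
  have "card (V - {v0} - {x}) \<ge> 1" using c3 v0 x fin by simp
  then have "V - {v0} - {x} \<noteq> {}" by (intro notI) simp
  then obtain a where a: "a \<in> V - {v0} - {x}" by blast
  define C where "C = (\<lambda>u w. (u,w) \<in> (Rl H V v0)\<^sup>*)"
  have Csym: "C u w \<Longrightarrow> C w u" for u w unfolding C_def by (rule Rl_conn_sym)
  have Crefl: "C u u" for u unfolding C_def by simp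
  have Ctrans: "C u w \<Longrightarrow> C w y \<Longrightarrow> C u y" for u w y unfolding C_def by simp
  have noH: "{v0,p,q} \<notin> H" if "p \<in> V - {v0}" "q \<in> V - {v0}" "\<not> C p q" for p q
  proof
    assume "{v0,p,q} \<in> H"
    then have "(p,q) \<in> Rl H V v0" using that by (simp add: Rl_def)
    then show False using that(3) unfolding C_def by auto
  qed
  have "\<not> goodv H V v0 x a" using ng v0 by blast
  then obtain y where y: "y \<in> V - {v0}" "\<not> C x y" "\<not> C a y"
    using x a unfolding goodv_def C_def by auto
  have "x \<noteq> y" using y Crefl by auto
  have "\<not> goodv H V v0 x y" using ng v0 by blast
  then obtain z where z: "z \<in> V - {v0}" "\<not> C x z" "\<not> C y z"
    using x y \<open>x \<noteq> y\<close> unfolding goodv_def C_def by auto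
  have "z \<noteq> x" "z \<noteq> y" using z Crefl by auto
  define Rx where "Rx = Rl H V x"
  have edge: "(p,q) \<in> Rx\<^sup>*" if "{x,p,q} \<in> H" "p \<in> V - {x}" "q \<in> V - {x}" for p q
  proof -
    have "(p,q) \<in> Rx" using that by (simp add: Rx_def Rl_def)
    then show ?thesis by simp
  qed
  have "goodv H V x y v0"
    unfolding goodv_def
  proof (intro conjI ballI)
    show "y \<in> V - {x}" using y \<open>x \<noteq> y\<close> by auto
    show "v0 \<in> V - {x}" using v0 x by auto
    show "y \<noteq> v0" using y by auto
  next
    fix u assume u: "u \<in> V - {x}"
    show "(y,u) \<in> (Rl H V x)\<^sup>* \<or> (v0,u) \<in> (Rl H V x)\<^sup>*"
    proof (cases "u = v0 \<or> u = y")
      case True then show ?thesis by auto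
    next
      case False
      then have u': "u \<in> V - {v0}" "u \<noteq> y" "u \<noteq> x" "u \<noteq> v0" using u by auto
      have yx: "y \<in> V - {x}" "v0 \<in> V - {x}" "z \<in> V - {x}" using y v0 x z \<open>x \<noteq> y\<close> \<open>z \<noteq> x\<close> by auto
      have dist: "v0 \<noteq> x" "v0 \<noteq> y" "v0 \<noteq> z" using x y z by auto
      show ?thesis
      proof (cases "C x u")
        case True
        then have "\<not> C u y" using y(2) Ctrans by blast
        have h1: "{v0,x,y} \<notin> H" using noH x y by blast
        have h2: "{v0,u,y} \<notin> H" using noH u' y \<open>\<not> C u y\<close> by blast
        have "{v0,x,u} \<in> H \<or> {v0,x,y} \<in> H \<or> {v0,u,y} \<in> H \<or> {x,u,y} \<in> H"
          using four[OF cover H3, of v0 x u y] v0 x y u' dist \<open>x \<noteq> y\<close> by auto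
        then have "{v0,x,u} \<in> H \<or> {x,u,y} \<in> H" using h1 h2 by blast
        then show ?thesis
        proof
          assume "{v0,x,u} \<in> H"
          then have "{x,v0,u} \<in> H" by (simp add: insert_commute)
          then show ?thesis using edge yx u unfolding Rx_def by blast
        next
          assume "{x,u,y} \<in> H"
          then have "{x,y,u} \<in> H" by (simp add: insert_commute)
          then show ?thesis using edge yx u unfolding Rx_def by blast
        qed
      next
        case False
        note nxu = False
        show ?thesis
        proof (cases "C y u")
          case True
          then have "\<not> C u z" using z(3) Ctrans by blast
          have "u \<noteq> z" using True z(3) by auto
          have "{v0,x,u} \<notin> H" using noH x u' nxu by blast
          moreover have "{v0,x,z} \<notin> H" using noH x z by blast
          moreover have "{v0,u,z} \<notin> H" using noH u' z \<open>\<not> C u z\<close> by blast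
          moreover have "{v0,x,u} \<in> H \<or> {v0,x,z} \<in> H \<or> {v0,u,z} \<in> H \<or> {x,u,z} \<in> H"
            using four[OF cover H3, of v0 x u z] v0 x z u' dist \<open>u \<noteq> z\<close> \<open>z \<noteq> x\<close> by auto
          ultimately have "{x,u,z} \<in> H" by blast
          then have e1: "{x,z,u} \<in> H" by (simp add: insert_commute)
          have "{v0,x,y} \<notin> H" using noH x y by blast
          moreover have "{v0,y,z} \<notin> H" using noH y z by blast
          moreover have "{v0,x,y} \<in> H \<or> {v0,x,z} \<in> H \<or> {v0,y,z} \<in> H \<or> {x,y,z} \<in> H"
            using four[OF cover H3, of v0 x y z] v0 x y z dist \<open>x \<noteq> y\<close> \<open>z \<noteq> x\<close> \<open>z \<noteq> y\<close> by auto
          ultimately have e2: "{x,y,z} \<in> H" using \<open>{v0,x,z} \<notin> H\<close> by blast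
          have "(y,z) \<in> Rx\<^sup>*" using edge[OF e2] yx by blast
          moreover have "(z,u) \<in> Rx\<^sup>*" using edge[OF e1] yx u by blast
          ultimately have "(y,u) \<in> Rx\<^sup>*" by simp
          then show ?thesis unfolding Rx_def by blast
        next
          case False
          have "{v0,x,u} \<notin> H" using noH x u' nxu by blast
          moreover have "{v0,x,y} \<notin> H" using noH x y by blast
          moreover have "{v0,u,y} \<notin> H" using noH u' y False Csym by blast
          moreover have "{v0,x,u} \<in> H \<or> {v0,x,y} \<in> H \<or> {v0,u,y} \<in> H \<or> {x,u,y} \<in> H"
            using four[OF cover H3, of v0 x u y] v0 x y u' dist \<open>x \<noteq> y\<close> by auto
          ultimately have "{x,u,y} \<in> H" by blast
          then have "{x,y,u} \<in> H" by (simp add: insert_commute)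
          then show ?thesis using edge yx u unfolding Rx_def by blast
        qed
      qed
    qed
  qed
  then show False using ng x by blast
qed

lemma kern_subspace: "Q.subspace {c. bdry F G (bdry F' G' c) = 0}"
  by (auto simp: Q.subspace_def bdry_add bdry_scale bdry_zero qscale_def[symmetric])

lemma bd_cycle:
  assumes "finite V" "finite H" "\<forall>t\<in>H. t \<subseteq> V \<and> card t = 3" "c \<in> chains H"
  shows "bdry (KEg V) (KVg V) (bdry H (KEg V) c) = 0"
proof -
  have "ind ` H \<subseteq> {c. bdry (KEg V) (KVg V) (bdry H (KEg V) c) = 0}"
    using assms(1,2,3) dd_tri by auto
  then have "Q.span (ind ` H) \<subseteq> {c. bdry (KEg V) (KVg V) (bdry H (KEg V) c) = 0}"
    by (rule Q.span_minimal[OF _ kern_subspace])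
  moreover have "c \<in> Q.span (ind ` H)" using chains_in_span assms(2,4) by blast
  ultimately show ?thesis by blast
qed

lemma restrict_cycle:
  assumes "V' \<subseteq> V" "finite V" "c \<in> chains (KEg V')" "bdry (KEg V) (KVg V) c = 0"
  shows "bdry (KEg V') (KVg V') c = 0"
proof
  fix s
  show "bdry (KEg V') (KVg V') c s = 0 s"
  proof (cases "s \<in> KVg V'")
    case True
    then have sV: "s \<in> KVg V" using assms(1) by (auto simp: KVg_def)
    have "(\<Sum>t\<in>{t\<in>KEg V'. s \<subset> t \<and> card t = Suc (card s)}. (-1) ^ card {x\<in>s. x < the_elem (t - s)} * c t)
        = (\<Sum>t\<in>{t\<in>KEg V. s \<subset> t \<and> card t = Suc (card s)}. (-1) ^ card {x\<in>s. x < the_elem (t - s)} * c t)"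
    proof (rule sum.mono_neutral_left)
      show "finite {t\<in>KEg V. s \<subset> t \<and> card t = Suc (card s)}" using finite_KEg[OF assms(2)] by auto
      show "{t\<in>KEg V'. s \<subset> t \<and> card t = Suc (card s)} \<subseteq> {t\<in>KEg V. s \<subset> t \<and> card t = Suc (card s)}"
        using assms(1) by (auto simp: KEg_def)
      show "\<forall>i\<in>{t\<in>KEg V. s \<subset> t \<and> card t = Suc (card s)} - {t\<in>KEg V'. s \<subset> t \<and> card t = Suc (card s)}.
          (-1) ^ card {x\<in>s. x < the_elem (i - s)} * c i = 0"
        using assms(3) by (auto simp: chains_def)
    qed
    moreover have "bdry (KEg V) (KVg V) c s = 0" using assms(4) by simp
    ultimately show ?thesis using True sV by (simp add: bdry_def)
  next
    case False
    then show ?thesis by (simp add: bdry_def)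
  qed
qed

lemma vert_zero:
  assumes "v \<notin> V'" "c \<in> chains (KEg V')"
  shows "bdry (KEg V) (KVg V) c {v} = 0"
proof -
  have "\<forall>t\<in>{t\<in>KEg V. {v} \<subset> t \<and> card t = Suc (card {v})}. (-1) ^ card {x\<in>{v}. x < the_elem (t - {v})} * c t = 0"
  proof
    fix t assume "t \<in> {t\<in>KEg V. {v} \<subset> t \<and> card t = Suc (card {v})}"
    then have "v \<in> t" by auto
    then have "t \<notin> KEg V'" using assms(1) by (auto simp: KEg_def)
    then have "c t = 0" using assms(2) by (auto simp: chains_def)
    then show "(-1) ^ card {x\<in>{v}. x < the_elem (t - {v})} * c t = 0" by simp
  qed
  then show ?thesis unfolding bdry_def by (simp only: sum.neutral if_True if_False) simp
qed

lemma restrict_bd: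
  assumes "V' \<subseteq> V" "finite H" "H' = {e\<in>H. e \<subseteq> V'}" "c \<in> chains H'"
  shows "bdry H' (KEg V') c = bdry H (KEg V) c"
proof
  fix s
  have cz: "c t = 0" if "t \<notin> H'" for t using assms(4) that by (auto simp: chains_def)
  show "bdry H' (KEg V') c s = bdry H (KEg V) c s"
  proof (cases "s \<in> KEg V'")
    case True
    then have sV: "s \<in> KEg V" using assms(1) by (auto simp: KEg_def)
    have "(\<Sum>t\<in>{t\<in>H'. s \<subset> t \<and> card t = Suc (card s)}. (-1) ^ card {x\<in>s. x < the_elem (t - s)} * c t)
        = (\<Sum>t\<in>{t\<in>H. s \<subset> t \<and> card t = Suc (card s)}. (-1) ^ card {x\<in>s. x < the_elem (t - s)} * c t)"
    proof (rule sum.mono_neutral_left)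
      show "finite {t\<in>H. s \<subset> t \<and> card t = Suc (card s)}" using assms(2) by auto
      show "{t\<in>H'. s \<subset> t \<and> card t = Suc (card s)} \<subseteq> {t\<in>H. s \<subset> t \<and> card t = Suc (card s)}"
        using assms(3) by auto
      show "\<forall>i\<in>{t\<in>H. s \<subset> t \<and> card t = Suc (card s)} - {t\<in>H'. s \<subset> t \<and> card t = Suc (card s)}.
          (-1) ^ card {x\<in>s. x < the_elem (i - s)} * c i = 0"
        using cz by auto
    qed
    then show ?thesis using True sV by (simp add: bdry_def)
  next
    case False
    show ?thesis
    proof (cases "s \<in> KEg V")
      case False
      then show ?thesis using \<open>s \<notin> KEg V'\<close> by (simp add: bdry_def)
    next
      case sKE: True
    have "(\<Sum>t\<in>{t\<in>H. s \<subset> t \<and> card t = Suc (card s)}. (-1) ^ card {x\<in>s. x < the_elem (t - s)} * c t) = 0"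
    proof (rule sum.neutral, rule ballI)
      fix t assume t: "t \<in> {t\<in>H. s \<subset> t \<and> card t = Suc (card s)}"
      show "(-1) ^ card {x\<in>s. x < the_elem (t - s)} * c t = 0"
      proof (cases "t \<in> H'")
        case True
        then have "t \<subseteq> V'" using assms(3) by auto
        then have "s \<subseteq> V'" using t by auto
        then have "s \<in> KEg V'" using sKE by (auto simp: KEg_def)
        then show ?thesis using \<open>s \<notin> KEg V'\<close> by simp
      next
        case False
        then show ?thesis using cz by simp
      qed
    qed
    then show ?thesis using False sKE by (simp add: bdry_def)
    qed
  qed
qed

definition Zc :: "nat set \<Rightarrow> (nat set \<Rightarrow> rat) set" where
  "Zc V = {c \<in> chains (KEg V). bdry (KEg V) (KVg V) c = (\<lambda>_. 0)}"

definition Bd :: "nat set \<Rightarrow> nat set set \<Rightarrow> (nat set \<Rightarrow> rat) set" where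
  "Bd V H = bdry H (KEg V) ` chains H"

lemma kern1_subspace: "Q.subspace {c. bdry F G c = 0}"
  by (auto simp: Q.subspace_def bdry_add bdry_scale bdry_zero qscale_def[symmetric])

lemma zero_lam: "(\<lambda>_. 0::rat) = 0" by (simp add: fun_eq_iff)

lemma base_case:
  assumes "finite V" "card V = 2"
  shows "Zc V \<subseteq> Q.span (Bd V H)"
proof
  fix z assume z: "z \<in> Zc V"
  obtain x y where xy: "V = {x,y}" "x \<noteq> y" using assms(2) by (meson card_2_iff)
  obtain p q where pq: "V = {p,q}" "p < q"
  proof (cases "x < y")
    case True then show ?thesis using that xy by blast
  next
    case False then have "y < x" using xy by auto
    then show ?thesis using that xy by (metis insert_commute)
  qed
  have KE: "KEg V = {{p,q}}"
  proof
    show "KEg V \<subseteq> {{p,q}}"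
    proof
      fix e assume "e \<in> KEg V"
      then have "e \<subseteq> {p,q}" "card e = 2" using pq by (auto simp: KEg_def)
      then have "e = {p,q}" using pq by (intro card_subset_eq) auto
      then show "e \<in> {{p,q}}" by simp
    qed
    show "{{p,q}} \<subseteq> KEg V" using pq by (auto simp: KEg_def)
  qed
  have zc: "z \<in> chains {{p,q}}" using z KE by (simp add: Zc_def)
  have zeq: "z = qscale (z {p,q}) (ind {p,q})"
    using chains_span[OF _ zc] by simp
  have e1: "bdry (KEg V) (KVg V) z = qscale (z {p,q}) (ind {q} - ind {p})"
    apply (subst zeq) unfolding bdry_scale
    using bdry_edge[OF assms(1), of p q] pq by simp
  have e2: "bdry (KEg V) (KVg V) z = 0" using z by (simp add: Zc_def zero_lam)
  have "qscale (z {p,q}) (ind {q} - ind {p}) = 0" unfolding e1[symmetric] by (rule e2)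
  from fun_cong[OF this, of "{q}"] have "z {p,q} * (ind {q} {q} - ind {p} {q}) = 0"
    by (simp add: qscale_def)
  then have "z {p,q} = 0" using pq by (simp add: ind_def)
  then have "z = 0" using zeq by (simp add: qscale_def fun_eq_iff)
  then show "z \<in> Q.span (Bd V H)" by (simp add: Q.span_zero)
qed

lemma step_case:
  assumes fin: "finite V" and H3: "\<forall>e\<in>H. e \<subseteq> V \<and> card e = 3"
    and v: "v \<in> V" and g: "goodv H V v x1 x2"
    and W': "finite W'" "Zc (V - {v}) \<subseteq> Q.span (Bd (V - {v}) {e\<in>H. e \<subseteq> V - {v}} \<union> W')"
  shows "\<exists>W. finite W \<and> card W \<le> Suc (card W') \<and> Zc V \<subseteq> Q.span (Bd V H \<union> W)"
proof -
  define V' where "V' = V - {v}"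
  define H' where "H' = {e\<in>H. e \<subseteq> V'}"
  define T0 where "T0 = {v,x1,x2}"
  define w where "w = bdry {T0} (KEg V) (ind T0)"
  define e2 where "e2 = ind {v,x2}"
  define E' where "E' = ind ` KEg V'"
  define B where "B = Bd V H"
  define W where "W = insert w W'"
  define X where "X = insert e2 (insert w (B \<union> E'))"
  define d1 where "d1 = bdry (KEg V) (KVg V)"
  have x12: "x1 \<in> V'" "x2 \<in> V'" "x1 \<noteq> x2" and reachg: "\<forall>x\<in>V'. (x1,x) \<in> (Rl H V v)\<^sup>* \<or> (x2,x) \<in> (Rl H V v)\<^sup>*"
    using g unfolding goodv_def V'_def by auto
  have vV': "v \<notin> V'" "V' \<subseteq> V" unfolding V'_def by auto
  have finH: "finite H" using H3 fin by (intro finite_subset[of H "Pow V"]) auto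
  have ne: "v \<noteq> x1" "v \<noteq> x2" using x12 vV' by auto
  have T0c: "card T0 = 3" using ne x12(3) unfolding T0_def by simp
  have T0V: "T0 \<subseteq> V" using x12 vV' v unfolding T0_def by auto
  have d1w: "d1 w = 0" unfolding d1_def w_def using dd_tri[OF fin, of "{T0}" T0] T0c T0V by simp
  have d1B: "d1 b = 0" if "b \<in> Q.span B" for b
  proof -
    have "B \<subseteq> {c. d1 c = 0}"
      using bd_cycle[OF fin finH] H3 unfolding B_def Bd_def d1_def by auto
    then have "Q.span B \<subseteq> {c. d1 c = 0}" unfolding d1_def by (rule Q.span_minimal[OF _ kern1_subspace])
    then show ?thesis using that by auto
  qed
  have E'X: "ind q \<in> Q.span X" if "q \<in> KEg V'" for q
    using that unfolding X_def E'_def by (intro Q.span_base) auto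
  have base1: "ind {v,x1} \<in> Q.span X"
  proof (rule tri_span[of "{T0}" T0 V X])
    show "bdry {T0} (KEg V) (ind T0) \<in> Q.span X" unfolding X_def w_def[symmetric] by (intro Q.span_base) auto
    show "{v,x1} \<subseteq> T0" "card {v,x1} = 2" using ne unfolding T0_def by auto
    fix q assume q: "q \<subseteq> T0" "card q = 2" "q \<noteq> {v,x1}"
    have "q \<noteq> T0"
    proof
      assume "q = T0" then show False using q(2) T0c by simp
    qed
    then have "q \<subset> T0" using q(1) by blast
    then have "q = {x1,x2} \<or> q = {v,x2} \<or> q = {v,x1}" using q(2) unfolding T0_def by (rule sub3_cases)
    then show "ind q \<in> Q.span X"
    proof (elim disjE)
      assume "q = {x1,x2}"
      then have "q \<in> KEg V'" using x12 by (auto simp: KEg_def)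
      then show ?thesis by (rule E'X)
    next
      assume "q = {v,x2}" then show ?thesis unfolding X_def e2_def by (intro Q.span_base) auto
    next
      assume "q = {v,x1}" then show ?thesis using q by simp
    qed
  qed (simp_all add: T0c T0V)
  have base2: "ind {v,x2} \<in> Q.span X" unfolding X_def e2_def by (intro Q.span_base) auto
  have stepR: "ind {v,x'} \<in> Q.span X" if "(y,x') \<in> Rl H V v" "ind {v,y} \<in> Q.span X" for y x'
  proof -
    have t: "{v,y,x'} \<in> H" "y \<in> V'" "x' \<in> V'" using that(1) unfolding Rl_def V'_def by auto
    have ct: "card {v,y,x'} = 3" and tV: "{v,y,x'} \<subseteq> V" using H3 t(1) by auto
    have "y \<noteq> x'"
    proof
      assume "y = x'"
      then have "card {v,y,x'} \<le> 2" by (simp add: card_insert_le_m1)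
      then show False using ct by simp
    qed
    show ?thesis
    proof (rule tri_span[of H "{v,y,x'}" V X])
      have "ind {v,y,x'} \<in> chains H" by (rule ind_chains[OF t(1)])
      then have "bdry H (KEg V) (ind {v,y,x'}) \<in> B" unfolding B_def Bd_def by blast
      then show "bdry H (KEg V) (ind {v,y,x'}) \<in> Q.span X" unfolding X_def by (intro Q.span_base) auto
      show "{v,x'} \<subseteq> {v,y,x'}" by auto
      have "v \<noteq> x'" using t(3) vV'(1) by blast
      then show "card {v,x'} = 2" by simp
      fix q assume q: "q \<subseteq> {v,y,x'}" "card q = 2" "q \<noteq> {v,x'}"
      have "q \<noteq> {v,y,x'}"
      proof
        assume "q = {v,y,x'}" then show False using q(2) ct by simp
      qed
      then have "q \<subset> {v,y,x'}" using q(1) by blast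
      then have "q = {y,x'} \<or> q = {v,x'} \<or> q = {v,y}" using q(2) by (rule sub3_cases)
      then show "ind q \<in> Q.span X"
      proof (elim disjE)
        assume "q = {y,x'}"
        then have "q \<in> KEg V'" using t \<open>y \<noteq> x'\<close> by (auto simp: KEg_def)
        then show ?thesis by (rule E'X)
      next
        assume "q = {v,x'}" then show ?thesis using q by simp
      next
        assume "q = {v,y}" then show ?thesis using that(2) by simp
      qed
    qed (rule finH t(1) ct tV)+
  qed
  have reach: "ind {v,x} \<in> Q.span X" if "x \<in> V'" for x
  proof -
    have "(x1,x) \<in> (Rl H V v)\<^sup>* \<or> (x2,x) \<in> (Rl H V v)\<^sup>*" using reachg that by auto
    then show ?thesis
    proof
      assume "(x1,x) \<in> (Rl H V v)\<^sup>*"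
      then show ?thesis
        by (induction rule: rtrancl_induct) (use base1 stepR in auto)
    next
      assume "(x2,x) \<in> (Rl H V v)\<^sup>*"
      then show ?thesis
        by (induction rule: rtrancl_induct) (use base2 stepR in auto)
    qed
  qed
  have allE: "ind ` KEg V \<subseteq> Q.span X"
  proof
    fix f assume "f \<in> ind ` KEg V"
    then obtain e where e: "e \<in> KEg V" "f = ind e" by blast
    show "f \<in> Q.span X"
    proof (cases "v \<in> e")
      case False
      then have "e \<in> KEg V'" using e(1) unfolding V'_def KEg_def by auto
      then show ?thesis using e(2) E'X by simp
    next
      case True
      have "card e = 2" "e \<subseteq> V" using e(1) by (auto simp: KEg_def)
      then obtain a b where ab: "e = {a,b}" "a \<noteq> b" by (meson card_2_iff)
      then obtain x where x: "e = {v,x}" "x \<noteq> v" using True by (auto simp: insert_commute)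
      then have "x \<in> V'" using \<open>e \<subseteq> V\<close> unfolding V'_def by auto
      then show ?thesis using reach x e(2) by simp
    qed
  qed
  show ?thesis
  proof (intro exI conjI)
    show "finite W" using W'(1) unfolding W_def by simp
    show "card W \<le> Suc (card W')" unfolding W_def by (simp add: card_insert_le_m1 card_insert_if)
    show "Zc V \<subseteq> Q.span (Bd V H \<union> W)"
    proof
      fix z assume z: "z \<in> Zc V"
      have zX: "z \<in> Q.span X"
      proof -
        have "z \<in> chains (KEg V)" using z by (simp add: Zc_def)
        then have "z \<in> Q.span (ind ` KEg V)" using chains_in_span finite_KEg[OF fin] by blast
        moreover have "Q.span (ind ` KEg V) \<subseteq> Q.span X" using allE by (rule Q.span_minimal[OF _ Q.subspace_span])
        ultimately show ?thesis by blast
      qed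
      then obtain \<gamma> where "z - qscale \<gamma> e2 \<in> Q.span (insert w (B \<union> E'))"
        unfolding X_def Q.span_breakdown_eq by blast
      then obtain \<beta> where "z - qscale \<gamma> e2 - qscale \<beta> w \<in> Q.span (B \<union> E')"
        unfolding Q.span_breakdown_eq by blast
      then obtain b c' where bc: "z - qscale \<gamma> e2 - qscale \<beta> w = b + c'" "b \<in> Q.span B" "c' \<in> Q.span E'"
        unfolding Q.span_Un by blast
      have c'ch: "c' \<in> chains (KEg V')" using bc(3) span_ind_chains unfolding E'_def by blast
      have c'eq: "c' = z - qscale \<gamma> e2 - qscale \<beta> w - b" using bc(1) by (simp add: algebra_simps)
      have d1z: "d1 z = 0" using z by (simp add: Zc_def d1_def zero_lam)
      have d1b: "d1 b = 0" by (rule d1B[OF bc(2)])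
      have d1c': "d1 c' = - qscale \<gamma> (d1 e2)"
        using d1z d1w d1b unfolding c'eq d1_def bdry_diff bdry_scale by (simp add: qscale_def fun_eq_iff)
      have v0: "d1 c' {v} = 0" unfolding d1_def by (rule vert_zero[OF vV'(1) c'ch])
      have ve: "d1 e2 {v} \<noteq> 0"
      proof -
        have "{v,x2} \<in> KEg V" using ne x12 vV' v by (auto simp: KEg_def)
        then have "d1 e2 {v} = (if {v} \<in> KVg V \<and> {v} \<subset> {v,x2} \<and> card {v,x2} = Suc (card {v})
            then (-1) ^ card {x\<in>{v}. x < the_elem ({v,x2} - {v})} else 0)"
          unfolding d1_def e2_def by (rule bdry_ind[OF finite_KEg[OF fin]])
        moreover have "{v} \<in> KVg V \<and> {v} \<subset> {v,x2} \<and> card {v,x2} = Suc (card {v})"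
          using v ne by (auto simp: KVg_def)
        ultimately show ?thesis by simp
      qed
      have "\<gamma> * d1 e2 {v} = 0" using fun_cong[OF d1c', of "{v}"] v0 by (simp add: qscale_def)
      then have g0: "\<gamma> = 0" using ve by simp
      then have d1c'0: "d1 c' = 0" using d1c' by (simp add: qscale_def fun_eq_iff)
      have "bdry (KEg V') (KVg V') c' = 0"
        using restrict_cycle[OF vV'(2) fin c'ch] d1c'0 unfolding d1_def by simp
      then have "c' \<in> Zc V'" unfolding Zc_def using c'ch by (simp add: zero_lam)
      then have "c' \<in> Q.span (Bd V' H' \<union> W')" using W'(2) unfolding V'_def H'_def by blast
      moreover have "Bd V' H' \<subseteq> Bd V H"
      proof
        fix f assume "f \<in> Bd V' H'"
        then obtain c where c: "c \<in> chains H'" "f = bdry H' (KEg V') c" by (auto simp: Bd_def)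
        have "f = bdry H (KEg V) c" using restrict_bd[OF vV'(2) finH H'_def c(1)] c(2) by simp
        moreover have "c \<in> chains H" using c(1) by (auto simp: chains_def H'_def)
        ultimately show "f \<in> Bd V H" by (auto simp: Bd_def)
      qed
      ultimately have c'S: "c' \<in> Q.span (Bd V H \<union> W)"
        using Q.span_mono[of "Bd V' H' \<union> W'" "Bd V H \<union> W"] unfolding W_def by blast
      have bS: "b \<in> Q.span (Bd V H \<union> W)" using bc(2) Q.span_mono[of B "Bd V H \<union> W"] unfolding B_def by blast
      have wS: "w \<in> Q.span (Bd V H \<union> W)" unfolding W_def by (intro Q.span_base) auto
      have "z = c' + b + qscale \<beta> w" using c'eq g0 by (simp add: qscale_def fun_eq_iff)
      then show "z \<in> Q.span (Bd V H \<union> W)" using c'S bS wS by (simp add: Q.span_add Q.span_scale)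
    qed
  qed
qed

lemma main_ind:
  "card V = n \<Longrightarrow> finite V \<Longrightarrow> n \<ge> 2 \<Longrightarrow> (\<forall>e\<in>H. e \<subseteq> V \<and> card e = 3) \<Longrightarrow>
   (\<forall>S. S \<subseteq> V \<and> card S = 4 \<longrightarrow> (\<exists>e\<in>H. e \<subseteq> S)) \<Longrightarrow>
   \<exists>W. finite W \<and> card W \<le> n - 2 \<and> Zc V \<subseteq> Q.span (Bd V H \<union> W)"
proof (induction n arbitrary: V H)
  case 0 then show ?case by simp
next
  case (Suc m)
  show ?case
  proof (cases "m = 1")
    case True
    then have "card V = 2" using Suc.prems(1) by simp
    then have "Zc V \<subseteq> Q.span (Bd V H \<union> {})" using base_case Suc.prems(2) by simp
    then show ?thesis by (intro exI[of _ "{}"]) simp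
  next
    case False
    then have m2: "m \<ge> 2" using Suc.prems(3) by simp
    have H3: "\<forall>e\<in>H. card e = 3" using Suc.prems(4) by simp
    obtain v x1 x2 where v: "v \<in> V" and g: "goodv H V v x1 x2"
      using exists_good[OF Suc.prems(2) _ H3 Suc.prems(5)] Suc.prems(1) m2 by auto
    define V' where "V' = V - {v}"
    define H' where "H' = {e\<in>H. e \<subseteq> V'}"
    have "card V' = m" using Suc.prems(1,2) v unfolding V'_def by simp
    moreover have "finite V'" using Suc.prems(2) unfolding V'_def by simp
    moreover have "\<forall>e\<in>H'. e \<subseteq> V' \<and> card e = 3" using H3 unfolding H'_def by auto
    moreover have "\<forall>S. S \<subseteq> V' \<and> card S = 4 \<longrightarrow> (\<exists>e\<in>H'. e \<subseteq> S)"
    proof (intro allI impI)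
      fix S assume S: "S \<subseteq> V' \<and> card S = 4"
      then have "S \<subseteq> V" unfolding V'_def by auto
      then obtain e where "e \<in> H" "e \<subseteq> S" using Suc.prems(5) S by blast
      then show "\<exists>e\<in>H'. e \<subseteq> S" using S unfolding H'_def by auto
    qed
    ultimately obtain W' where W': "finite W'" "card W' \<le> m - 2" "Zc V' \<subseteq> Q.span (Bd V' H' \<union> W')"
      using Suc.IH[of V' H'] m2 by blast
    obtain W where W: "finite W" "card W \<le> Suc (card W')" "Zc V \<subseteq> Q.span (Bd V H \<union> W)"
      using step_case[OF Suc.prems(2,4) v g W'(1)] W'(3) unfolding V'_def H'_def by blast
    have "card W \<le> Suc m - 2" using W(2) W'(2) m2 by simp
    then show ?thesis using W by blast
  qed
qed

theorem mainTheorem10: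
  fixes n :: nat and H :: "nat set set"
  assumes "n \<ge> 3"
    and "\<forall>e\<in>H. e \<subseteq> {1..n} \<and> card e = 3"
    and "\<forall>S. S \<subseteq> {1..n} \<and> card S = 4 \<longrightarrow> (\<exists>e\<in>H. e \<subseteq> S)"
  shows "betti1 n H \<le> n - 2"
proof -
  have KE: "KE n = KEg {1..n}" by (simp add: KE_def KEg_def)
  have KV: "KV n = KVg {1..n}" by (simp add: KV_def KVg_def)
  have Zeq: "cycles1 n H = Zc {1..n}" by (simp add: cycles1_def Zc_def KE KV)
  have Beq: "boundaries1 n H = Bd {1..n} H" by (simp add: boundaries1_def Bd_def KE)
  obtain W where W: "finite W" "card W \<le> n - 2" "Zc {1..n} \<subseteq> Q.span (Bd {1..n} H \<union> W)"
    using main_ind[of "{1..n}" n H] assms by auto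
  define B1 where "B1 = boundaries1 n H"
  obtain A where A: "A \<subseteq> B1" "Q.independent A" "B1 \<subseteq> Q.span A" "card A = Q.dim B1"
    using Q.basis_exists by blast
  have finE: "finite (ind ` KEg {1..n})" using finite_KEg[of "{1..n}"] by simp
  have "B1 \<subseteq> chains (KEg {1..n})" unfolding B1_def Beq Bd_def using bdry_chains by blast
  then have "A \<subseteq> Q.span (ind ` KEg {1..n})"
    using A(1) chains_in_span[OF finite_KEg[of "{1..n}"]] by blast
  then have finA: "finite A" using Q.independent_span_bound[OF finE A(2)] by blast
  have "B1 \<union> W \<subseteq> Q.span (A \<union> W)"
    using A(3) Q.span_mono[of A "A \<union> W"] Q.span_superset[of "A \<union> W"] by blast
  then have "Q.span (B1 \<union> W) \<subseteq> Q.span (A \<union> W)" by (rule Q.span_minimal[OF _ Q.subspace_span])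
  then have "cycles1 n H \<subseteq> Q.span (A \<union> W)" using W(3) unfolding Zeq B1_def Beq by blast
  then have "Q.dim (cycles1 n H) \<le> card (A \<union> W)" using finA W(1) by (intro Q.dim_le_card) auto
  also have "\<dots> \<le> card A + card W" by (rule card_Un_le)
  finally have "Q.dim (cycles1 n H) \<le> Q.dim B1 + (n - 2)" using A(4) W(2) by simp
  then show ?thesis unfolding betti1_def B1_def by simp
qed

end
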